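(* Let $(\star)$ be a linear system over $\mathbb{F}_q$ ($q$ a prime power) with coefficient matrix $A\in\mathbb{F}_q^{m\times k}$ which is of type (RC), non-degenerate and irreducible. Let $j_1\ne j_2$ be indices in the same column equivalence class, and let $\{(x^{(i)}_1,\dots,x^{(i)}_k)\}_{i=1}^L$ be a list of pairwise disjoint solutions of $(\star)$ in $(\mathbb{F}_q^n)^k$. If $L\ge4q^k(\Gamma_q)^n$, then there exist $i\in[L]$ and a solution $(y_1,\dots,y_k)$ of $(\star)$ such that: (i) $y_j=x^{(i)}_j$ for all $j\ne j_1,j_2$, and $y_j\in\{x^{(1)}_j,\dots,x^{(L)}_j\}$ for $j\in\{j_1,j_2\}$; (ii) $\mathrm{Ann}_{\mathrm{bal}}(y_1,\dots,y_k)\subseteq\mathrm{Ann}_{\mathrm{bal}}(x^{(i)}_1,\dots,x^{(i)}_k)$; (iii) no $b\in\mathrm{Ann}_{\mathrm{bal}}(y_1,\dots,y_k)$ breaks the pair $\{j_1,j_2\}$.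
   Context: Solutions are tuples in $(\mathbb{F}_q^n)^k$ with $\sum_ja_{ij}x_j=0$ for all $i$. Two solutions $(x_j)$, $(y_j)$ are disjoint if $\{x_1,\dots,x_k\}\cap\{y_1,\dots,y_k\}=\varnothing$. Indices $j,j'$ are equivalent if columns $j,j'$ of $A$ are nonzero scalar multiples of one another; classes are column equivalence classes. A vector $b\in\mathbb{F}_q^k$ breaks the pair $\{j_1,j_2\}$ (two distinct indices in one class) if, after appending $b$ as an extra row to $A$, the columns $j_1,j_2$ are no longer scalar multiples of one another. $\mathrm{Ann}_{\mathrm{bal}}(x_1,\dots,x_k)=\{b\in\mathbb{F}_q^k:\sum_jb_jx_j=0,\ \sum_jb_j=0\}$. Type (RC): every row of $A$ sums to $0$ and at most one column equivalence class has size $1$. Non-degenerate: rows of $A$ linearly independent and no zero column. Irreducible: not equivalent (same row space) to a system whose variables split into at least two classes with each equation only using variables of one class. $\Gamma_q:=q\,J(q)$ where $J(t)=\frac1t\min_{0<x<1}\frac{1+x+\cdots+x^{t-1}}{x^{(t-1)/3}}$. *)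

theory Defs
  imports "HOL-Analysis.Analysis"
begin

(* A linear system: coefficient matrix A given as  A i j  for rows i < m and columns j < k,
   over a finite field 'a = F_q.  Vectors of F_q^n are elements of 'a ^ 'n, n = CARD('n). *)

definition is_solution ::
  "(nat \<Rightarrow> nat \<Rightarrow> 'a::field) \<Rightarrow> nat \<Rightarrow> nat \<Rightarrow> (nat \<Rightarrow> 'a ^ 'n) \<Rightarrow> bool" where
  "is_solution A m k x \<longleftrightarrow> (\<forall>i<m. (\<Sum>j<k. A i j *s x j) = 0)"

definition disjoint_sols :: "nat \<Rightarrow> (nat \<Rightarrow> 'b) \<Rightarrow> (nat \<Rightarrow> 'b) \<Rightarrow> bool" where
  "disjoint_sols k x y \<longleftrightarrow> (x ` {..<k}) \<inter> (y ` {..<k}) = {}"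

definition col_equiv :: "(nat \<Rightarrow> nat \<Rightarrow> 'a::field) \<Rightarrow> nat \<Rightarrow> nat \<Rightarrow> nat \<Rightarrow> bool" where
  "col_equiv A m j j' \<longleftrightarrow> (\<exists>c. c \<noteq> 0 \<and> (\<forall>i<m. A i j = c * A i j'))"

definition col_class :: "(nat \<Rightarrow> nat \<Rightarrow> 'a::field) \<Rightarrow> nat \<Rightarrow> nat \<Rightarrow> nat \<Rightarrow> nat set" where
  "col_class A m k j = {j'. j' < k \<and> col_equiv A m j j'}"

definition type_RC :: "(nat \<Rightarrow> nat \<Rightarrow> 'a::field) \<Rightarrow> nat \<Rightarrow> nat \<Rightarrow> bool" where
  "type_RC A m k \<longleftrightarrow>
     (\<forall>i<m. (\<Sum>j<k. A i j) = 0) \<and>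
     card {j. j < k \<and> card (col_class A m k j) = 1} \<le> 1"

definition non_degenerate :: "(nat \<Rightarrow> nat \<Rightarrow> 'a::field) \<Rightarrow> nat \<Rightarrow> nat \<Rightarrow> bool" where
  "non_degenerate A m k \<longleftrightarrow>
     (\<forall>c. (\<forall>j<k. (\<Sum>i<m. c i * A i j) = 0) \<longrightarrow> (\<forall>i<m. c i = 0)) \<and>
     (\<forall>j<k. \<exists>i<m. A i j \<noteq> 0)"

definition row_space :: "(nat \<Rightarrow> nat \<Rightarrow> 'a::field) \<Rightarrow> nat \<Rightarrow> nat \<Rightarrow> (nat \<Rightarrow> 'a) set" where
  "row_space A m k = {b. \<exists>c. \<forall>j. b j = (if j < k then (\<Sum>i<m. c i * A i j) else 0)}"

definition reducible :: "(nat \<Rightarrow> nat \<Rightarrow> 'a::field) \<Rightarrow> nat \<Rightarrow> nat \<Rightarrow> bool" where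
  "reducible A m k \<longleftrightarrow>
     (\<exists>(B :: nat \<Rightarrow> nat \<Rightarrow> 'a) m' P.
        row_space B m' k = row_space A m k \<and>
        (\<forall>C\<in>P. C \<noteq> {}) \<and> \<Union>P = {..<k} \<and>
        (\<forall>C\<in>P. \<forall>D\<in>P. C \<noteq> D \<longrightarrow> C \<inter> D = {}) \<and>
        2 \<le> card P \<and>
        (\<forall>i<m'. \<exists>C\<in>P. \<forall>j<k. j \<notin> C \<longrightarrow> B i j = 0))"

definition irreducible_sys :: "(nat \<Rightarrow> nat \<Rightarrow> 'a::field) \<Rightarrow> nat \<Rightarrow> nat \<Rightarrow> bool" where
  "irreducible_sys A m k \<longleftrightarrow> \<not> reducible A m k"

definition append_row :: "(nat \<Rightarrow> nat \<Rightarrow> 'a) \<Rightarrow> nat \<Rightarrow> (nat \<Rightarrow> 'a) \<Rightarrow> nat \<Rightarrow> nat \<Rightarrow> 'a" where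
  "append_row A m b = (\<lambda>i j. if i < m then A i j else b j)"

definition breaks :: "(nat \<Rightarrow> nat \<Rightarrow> 'a::field) \<Rightarrow> nat \<Rightarrow> nat \<Rightarrow> nat \<Rightarrow> (nat \<Rightarrow> 'a) \<Rightarrow> bool" where
  "breaks A m j1 j2 b \<longleftrightarrow> \<not> col_equiv (append_row A m b) (Suc m) j1 j2"

definition Ann_bal :: "nat \<Rightarrow> (nat \<Rightarrow> 'a::field ^ 'n) \<Rightarrow> (nat \<Rightarrow> 'a) set" where
  "Ann_bal k x = {b. (\<forall>j. k \<le> j \<longrightarrow> b j = 0) \<and> (\<Sum>j<k. b j *s x j) = 0 \<and> (\<Sum>j<k. b j) = 0}"

definition J_fun :: "nat \<Rightarrow> real" where
  "J_fun t = (1 / real t) *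
     (INF x\<in>{0<..<1::real}. (\<Sum>i<t. x ^ i) / x powr ((real t - 1) / 3))"

definition Gamma_q :: "nat \<Rightarrow> real" where
  "Gamma_q q = real q * J_fun q"

end

theory Submission
  imports Defs
begin
lemma fin_field_card_ge2: "CARD('a::{finite,field}) \<ge> 2"
proof -
  have "{0::'a, 1} \<subseteq> UNIV" by simp
  then have "card {0::'a,1} \<le> CARD('a)" by (intro card_mono) auto
  then show ?thesis by simp
qed

lemma fin_field_pow:
  fixes z :: "'a::{finite,field}"
  assumes "z \<noteq> 0"
  shows "z ^ (CARD('a) - 1) = 1"
proof -
  let ?S = "UNIV - {0::'a}"
  have inj: "inj_on (\<lambda>y. z * y) ?S" using assms by (auto simp: inj_on_def)
  have img: "(\<lambda>y. z * y) ` ?S = ?S"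
  proof
    show "(\<lambda>y. z * y) ` ?S \<subseteq> ?S" using assms by auto
    show "?S \<subseteq> (\<lambda>y. z * y) ` ?S"
    proof
      fix y assume "y \<in> ?S"
      then have "y = z * (y / z)" "y / z \<in> ?S" using assms by auto
      then show "y \<in> (\<lambda>y. z * y) ` ?S" by blast
    qed
  qed
  have "prod (\<lambda>y. y) ?S = prod (\<lambda>y. y) ((\<lambda>y. z * y) ` ?S)" using img by simp
  also have "\<dots> = prod (\<lambda>y. z * y) ?S" using prod.reindex[OF inj] by simp
  also have "\<dots> = z ^ card ?S * prod (\<lambda>y. y) ?S" by (simp add: prod.distrib)
  finally have eq: "prod (\<lambda>y. y) ?S = z ^ card ?S * prod (\<lambda>y. y) ?S" .
  have nz: "prod (\<lambda>y. y) ?S \<noteq> 0" by (simp)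
  have "card ?S = CARD('a) - 1" by (simp add: card_Diff_subset)
  with eq nz show ?thesis by simp
qed

definition Qf :: "'a::{finite,field} itself \<Rightarrow> nat" where "Qf _ = CARD('a) - 1"

lemma one_minus_pow:
  fixes s :: "'a::{finite,field}"
  shows "1 - s ^ (CARD('a) - 1) = (if s = 0 then 1 else 0)"
  using fin_field_pow[of s] fin_field_card_ge2[where 'a='a] by auto

definition Pairs :: "nat \<Rightarrow> (nat \<times> nat) set" where "Pairs Q = Sigma {..Q} (\<lambda>a. {..Q-a})"
definition Tm :: "nat \<Rightarrow> (nat \<times> nat) option set" where "Tm Q = insert None (Some ` Pairs Q)"
definition Kc :: "nat \<Rightarrow> (nat \<times> nat) option \<Rightarrow> 'a::comm_ring_1" where "Kc Q t = (case t of None \<Rightarrow> 1 | Some (a,b) \<Rightarrow> - (of_nat (Q choose a) * of_nat ((Q - a) choose b)))"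
definition ea :: "(nat \<times> nat) option \<Rightarrow> nat" where "ea t = (case t of None \<Rightarrow> 0 | Some (a,b) \<Rightarrow> a)"
definition eb :: "(nat \<times> nat) option \<Rightarrow> nat" where "eb t = (case t of None \<Rightarrow> 0 | Some (a,b) \<Rightarrow> b)"
definition ec :: "nat \<Rightarrow> (nat \<times> nat) option \<Rightarrow> nat" where "ec Q t = (case t of None \<Rightarrow> 0 | Some (a,b) \<Rightarrow> Q - a - b)"

lemma finite_Tm: "finite (Tm Q)" unfolding Tm_def Pairs_def by (intro finite.insertI finite_imageI finite_SigmaI) auto

lemma Tm_deg: "t \<in> Tm Q \<Longrightarrow> ea t + eb t + ec Q t \<le> Q"
  by (auto simp: Tm_def Pairs_def ea_def eb_def ec_def)

lemma expand3:
  fixes u v w :: "'a::comm_ring_1"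
  shows "1 - (u + v + w) ^ Q = (\<Sum>t\<in>Tm Q. Kc Q t * u ^ ea t * v ^ eb t * w ^ ec Q t)"
proof -
  have "(u + v + w) ^ Q = (u + (v + w)) ^ Q" by (simp add: add.assoc)
  also have "\<dots> = (\<Sum>a\<le>Q. of_nat (Q choose a) * u ^ a * (v + w) ^ (Q - a))"
    by (rule binomial_ring)
  also have "\<dots> = (\<Sum>a\<le>Q. \<Sum>b\<le>Q-a. of_nat (Q choose a) * of_nat ((Q - a) choose b) * u ^ a * v ^ b * w ^ (Q - a - b))"
    by (simp add: binomial_ring sum_distrib_left mult.assoc mult.left_commute)
  also have "\<dots> = (\<Sum>p\<in>Pairs Q. of_nat (Q choose fst p) * of_nat ((Q - fst p) choose snd p) * u ^ fst p * v ^ snd p * w ^ (Q - fst p - snd p))"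
    unfolding Pairs_def by (subst sum.Sigma) (auto simp: case_prod_beta)
  finally have e1: "(u + v + w) ^ Q = \<dots>" .
  have "(\<Sum>t\<in>Tm Q. Kc Q t * u ^ ea t * v ^ eb t * w ^ ec Q t)
     = 1 + (\<Sum>t\<in>Some ` Pairs Q. Kc Q t * u ^ ea t * v ^ eb t * w ^ ec Q t)"
    unfolding Tm_def by (subst sum.insert) (auto simp: Pairs_def Kc_def ea_def eb_def ec_def)
  also have "(\<Sum>t\<in>Some ` Pairs Q. Kc Q t * u ^ ea t * v ^ eb t * w ^ ec Q t)
     = (\<Sum>p\<in>Pairs Q. Kc Q (Some p) * u ^ ea (Some p) * v ^ eb (Some p) * w ^ ec Q (Some p))"
    by (subst sum.reindex) (auto)
  also have "\<dots> = - (\<Sum>p\<in>Pairs Q. of_nat (Q choose fst p) * of_nat ((Q - fst p) choose snd p) * u ^ fst p * v ^ snd p * w ^ (Q - fst p - snd p))"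
    by (simp add: sum_negf[symmetric] Kc_def ea_def eb_def ec_def case_prod_beta)
  finally show ?thesis using e1 by simp
qed

lemma sum_group_factor:
  fixes f :: "'s \<Rightarrow> 'a::comm_ring_1"
  assumes "finite S"
  shows "(\<Sum>\<sigma>\<in>S. m (A \<sigma>) * f \<sigma>) = (\<Sum>e\<in>A ` S. m e * (\<Sum>\<sigma>\<in>{\<sigma>\<in>S. A \<sigma> = e}. f \<sigma>))"
proof -
  have "(\<Sum>\<sigma>\<in>S. m (A \<sigma>) * f \<sigma>) = (\<Sum>e\<in>A ` S. \<Sum>\<sigma>\<in>{\<sigma>\<in>S. A \<sigma> = e}. m (A \<sigma>) * f \<sigma>)"
    using sum.image_gen[OF assms, of "\<lambda>\<sigma>. m (A \<sigma>) * f \<sigma>" A] by simp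
  also have "\<dots> = (\<Sum>e\<in>A ` S. m e * (\<Sum>\<sigma>\<in>{\<sigma>\<in>S. A \<sigma> = e}. f \<sigma>))"
    by (intro sum.cong refl) (simp add: sum_distrib_left)
  finally show ?thesis .
qed

lemma slice_split:
  fixes KK :: "'s \<Rightarrow> 'a::comm_ring_1" and m :: "'e \<Rightarrow> 'v \<Rightarrow> 'a"
  assumes fin: "finite S"
  shows "\<exists>G1 G2 G3. \<forall>U V W. (\<Sum>\<sigma>\<in>S. KK \<sigma> * m (A \<sigma>) U * m (B \<sigma>) V * m (C \<sigma>) W)
     = (\<Sum>e\<in>A ` {\<sigma>\<in>S. P (A \<sigma>)}. m e U * G1 e V W)
     + (\<Sum>e\<in>B ` {\<sigma>\<in>S. \<not> P (A \<sigma>) \<and> P (B \<sigma>)}. m e V * G2 e U W)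
     + (\<Sum>e\<in>C ` {\<sigma>\<in>S. \<not> P (A \<sigma>) \<and> \<not> P (B \<sigma>)}. m e W * G3 e U V)"
proof -
  define S1 where "S1 = {\<sigma>\<in>S. P (A \<sigma>)}"
  define S2 where "S2 = {\<sigma>\<in>S. \<not> P (A \<sigma>) \<and> P (B \<sigma>)}"
  define S3 where "S3 = {\<sigma>\<in>S. \<not> P (A \<sigma>) \<and> \<not> P (B \<sigma>)}"
  define G1 where "G1 e V W = (\<Sum>\<sigma>\<in>{\<sigma>\<in>S1. A \<sigma> = e}. KK \<sigma> * m (B \<sigma>) V * m (C \<sigma>) W)" for e V W
  define G2 where "G2 e U W = (\<Sum>\<sigma>\<in>{\<sigma>\<in>S2. B \<sigma> = e}. KK \<sigma> * m (A \<sigma>) U * m (C \<sigma>) W)" for e U W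
  define G3 where "G3 e U V = (\<Sum>\<sigma>\<in>{\<sigma>\<in>S3. C \<sigma> = e}. KK \<sigma> * m (A \<sigma>) U * m (B \<sigma>) V)" for e U V
  have f1: "finite S1" "finite S2" "finite S3" using fin by (auto simp: S1_def S2_def S3_def)
  have S: "S = S1 \<union> S2 \<union> S3" by (auto simp: S1_def S2_def S3_def)
  show ?thesis
  proof (intro exI allI)
    fix U V W
    let ?f = "\<lambda>\<sigma>. KK \<sigma> * m (A \<sigma>) U * m (B \<sigma>) V * m (C \<sigma>) W"
    have "(\<Sum>\<sigma>\<in>S. ?f \<sigma>) = (\<Sum>\<sigma>\<in>S1. ?f \<sigma>) + (\<Sum>\<sigma>\<in>S2. ?f \<sigma>) + (\<Sum>\<sigma>\<in>S3. ?f \<sigma>)"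
      unfolding S using f1
      by (subst sum.union_disjoint, auto simp: S1_def S2_def S3_def intro: sum.union_disjoint)
    also have "(\<Sum>\<sigma>\<in>S1. ?f \<sigma>) = (\<Sum>\<sigma>\<in>S1. m (A \<sigma>) U * (KK \<sigma> * m (B \<sigma>) V * m (C \<sigma>) W))"
      by (simp add: ac_simps)
    also have "\<dots> = (\<Sum>e\<in>A ` S1. m e U * G1 e V W)"
      unfolding G1_def by (rule sum_group_factor[OF f1(1), where m = "\<lambda>e. m e U"])
    also have "(\<Sum>\<sigma>\<in>S2. ?f \<sigma>) = (\<Sum>\<sigma>\<in>S2. m (B \<sigma>) V * (KK \<sigma> * m (A \<sigma>) U * m (C \<sigma>) W))"
      by (simp add: ac_simps)
    also have "\<dots> = (\<Sum>e\<in>B ` S2. m e V * G2 e U W)"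
      unfolding G2_def by (rule sum_group_factor[OF f1(2), where m = "\<lambda>e. m e V"])
    also have "(\<Sum>\<sigma>\<in>S3. ?f \<sigma>) = (\<Sum>\<sigma>\<in>S3. m (C \<sigma>) W * (KK \<sigma> * m (A \<sigma>) U * m (B \<sigma>) V))"
      by (simp add: ac_simps)
    also have "\<dots> = (\<Sum>e\<in>C ` S3. m e W * G3 e U V)"
      unfolding G3_def by (rule sum_group_factor[OF f1(3), where m = "\<lambda>e. m e W"])
    finally show "(\<Sum>\<sigma>\<in>S. ?f \<sigma>)
     = (\<Sum>e\<in>A ` {\<sigma>\<in>S. P (A \<sigma>)}. m e U * G1 e V W)
     + (\<Sum>e\<in>B ` {\<sigma>\<in>S. \<not> P (A \<sigma>) \<and> P (B \<sigma>)}. m e V * G2 e U W)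
     + (\<Sum>e\<in>C ` {\<sigma>\<in>S. \<not> P (A \<sigma>) \<and> \<not> P (B \<sigma>)}. m e W * G3 e U V)"
      by (simp add: S1_def S2_def S3_def)
  qed
qed

lemma card_FS: "finite X \<Longrightarrow> card (PiE X (\<lambda>_. UNIV :: 'a::finite set)) = CARD('a) ^ card X"
  by (simp add: card_PiE)

lemma finite_FS: "finite X \<Longrightarrow> finite (PiE X (\<lambda>_. UNIV :: 'a::finite set))"
  by (simp add: finite_PiE)

lemma sum_delta_mult:
  fixes h :: "'i \<Rightarrow> 'a::comm_ring_1"
  assumes "finite I" "y \<in> I"
  shows "(\<Sum>z\<in>I. (if P \<and> y = z then 1 else 0) * h z) = (if P then h y else 0)"
proof -
  have "(\<Sum>z\<in>I. (if P \<and> y = z then 1 else 0) * h z) = (\<Sum>z\<in>I. if z = y then (if P then h y else 0) else 0)"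
    by (intro sum.cong) auto
  also have "\<dots> = (if P then h y else 0)" using assms by (simp add: sum.delta)
  finally show ?thesis .
qed

abbreviation FS :: "'x set \<Rightarrow> ('x \<Rightarrow> 'a) set" where "FS X \<equiv> PiE X (\<lambda>_. UNIV)"

lemma slice_rank_diag:
  fixes I :: "'i set"
    and f1 :: "'s1 \<Rightarrow> 'i \<Rightarrow> 'a::{finite,field}" and g1 :: "'s1 \<Rightarrow> 'i \<Rightarrow> 'i \<Rightarrow> 'a"
    and f2 :: "'s2 \<Rightarrow> 'i \<Rightarrow> 'a" and g2 :: "'s2 \<Rightarrow> 'i \<Rightarrow> 'i \<Rightarrow> 'a"
    and f3 :: "'s3 \<Rightarrow> 'i \<Rightarrow> 'a" and g3 :: "'s3 \<Rightarrow> 'i \<Rightarrow> 'i \<Rightarrow> 'a"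
  assumes fI: "finite I" and f1: "finite R1" and f2: "finite R2" and f3: "finite R3"
    and dec: "\<And>x y z. x \<in> I \<Longrightarrow> y \<in> I \<Longrightarrow> z \<in> I \<Longrightarrow>
       (if x = y \<and> y = z then 1 else 0) =
       (\<Sum>s\<in>R1. f1 s x * g1 s y z) + (\<Sum>s\<in>R2. f2 s y * g2 s x z) + (\<Sum>s\<in>R3. f3 s z * g3 s x y)"
  shows "card I \<le> card R1 + card R2 + card R3"
proof -
  define q where "q = CARD('a)"
  have q2: "q \<ge> 2" unfolding q_def
  proof -
    have "card {0::'a,1} \<le> CARD('a)" by (intro card_mono) auto
    then show "CARD('a) \<ge> 2" by simp
  qed
  define W where "W = {h\<in>(FS I :: ('i \<Rightarrow> 'a) set). \<forall>s\<in>R3. (\<Sum>z\<in>I. h z * f3 s z) = 0}"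
  define supp where "supp h = {z\<in>I. h z \<noteq> 0}" for h :: "'i \<Rightarrow> 'a"
  have finW: "finite W" unfolding W_def using fI by (simp add: finite_PiE)
  have Wlin: "restrict (\<lambda>z. a * h1 z + b * h2 z) I \<in> W" if "h1 \<in> W" "h2 \<in> W" for a b h1 h2
  proof -
    have "(\<Sum>z\<in>I. (a * h1 z + b * h2 z) * f3 s z) = a * (\<Sum>z\<in>I. h1 z * f3 s z) + b * (\<Sum>z\<in>I. h2 z * f3 s z)" for s
      by (simp add: sum.distrib sum_distrib_left algebra_simps)
    then show ?thesis using that unfolding W_def by auto
  qed
  define Lw where "Lw h = restrict (\<lambda>s. \<Sum>z\<in>I. h z * f3 s z) R3" for h
  define sec where "sec v = (SOME h. h \<in> (FS I :: ('i \<Rightarrow> 'a) set) \<and> Lw h = v)" for v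
  define \<phi> where "\<phi> h = (restrict (\<lambda>z. h z - sec (Lw h) z) I, Lw h)" for h
  have secP: "sec (Lw h) \<in> (FS I :: ('i \<Rightarrow> 'a) set) \<and> Lw (sec (Lw h)) = Lw h" if "h \<in> (FS I :: ('i \<Rightarrow> 'a) set)" for h
    unfolding sec_def using someI_ex[of "\<lambda>h'. h' \<in> (FS I :: ('i \<Rightarrow> 'a) set) \<and> Lw h' = Lw h"] that by blast
  have step1: "card ((FS I :: ('i \<Rightarrow> 'a) set)) \<le> card W * q ^ card R3"
  proof -
    have "inj_on \<phi> ((FS I :: ('i \<Rightarrow> 'a) set))"
    proof (rule inj_onI)
      fix h1 h2 assume h: "h1 \<in> (FS I :: ('i \<Rightarrow> 'a) set)" "h2 \<in> (FS I :: ('i \<Rightarrow> 'a) set)" "\<phi> h1 = \<phi> h2"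
      then have L: "Lw h1 = Lw h2" and R: "restrict (\<lambda>z. h1 z - sec (Lw h1) z) I = restrict (\<lambda>z. h2 z - sec (Lw h2) z) I"
        unfolding \<phi>_def by auto
      have "h1 z = h2 z" if "z \<in> I" for z
        using fun_cong[OF R, of z] L that by simp
      then show "h1 = h2" using h(1,2) by (intro PiE_ext) auto
    qed
    moreover have "\<phi> ` (FS I :: ('i \<Rightarrow> 'a) set) \<subseteq> W \<times> (FS R3 :: ('s3 \<Rightarrow> 'a) set)"
    proof
      fix p assume "p \<in> \<phi> ` (FS I :: ('i \<Rightarrow> 'a) set)"
      then obtain h where h: "h \<in> (FS I :: ('i \<Rightarrow> 'a) set)" "p = \<phi> h" by auto
      have sp: "sec (Lw h) \<in> (FS I :: ('i \<Rightarrow> 'a) set)" "Lw (sec (Lw h)) = Lw h" using secP[OF h(1)] by auto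
      have "(\<Sum>z\<in>I. (h z - sec (Lw h) z) * f3 s z) = 0" if "s \<in> R3" for s
      proof -
        have "(\<Sum>z\<in>I. sec (Lw h) z * f3 s z) = (\<Sum>z\<in>I. h z * f3 s z)"
          using fun_cong[OF sp(2), of s] that unfolding Lw_def by simp
        then show ?thesis by (simp add: left_diff_distrib sum_subtractf)
      qed
      then have "restrict (\<lambda>z. h z - sec (Lw h) z) I \<in> W" unfolding W_def by auto
      moreover have "Lw h \<in> (FS R3 :: ('s3 \<Rightarrow> 'a) set)" unfolding Lw_def by auto
      ultimately show "p \<in> W \<times> (FS R3 :: ('s3 \<Rightarrow> 'a) set)" using h unfolding \<phi>_def by auto
    qed
    moreover have "finite (W \<times> (FS R3 :: ('s3 \<Rightarrow> 'a) set))" using finW f3 by (simp add: finite_PiE)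
    ultimately have "card ((FS I :: ('i \<Rightarrow> 'a) set)) \<le> card (W \<times> (FS R3 :: ('s3 \<Rightarrow> 'a) set))" by (rule card_inj_on_le)
    also have "\<dots> = card W * q ^ card R3" using f3 by (simp add: card_cartesian_product card_PiE q_def)
    finally show ?thesis .
  qed
  have zW: "restrict (\<lambda>_. 0) I \<in> W" unfolding W_def by auto
  define mx where "mx = Max ((\<lambda>h. card (supp h)) ` W)"
  have "mx \<in> (\<lambda>h. card (supp h)) ` W"
    unfolding mx_def using finW zW by (intro Max_in) auto
  then obtain h0 where h0: "h0 \<in> W" "card (supp h0) = mx" by auto
  have maxP: "card (supp h) \<le> card (supp h0)" if "h \<in> W" for h
    using Max_ge[of "(\<lambda>h. card (supp h)) ` W"] finW that h0 unfolding mx_def by auto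
  define S0 where "S0 = supp h0"
  have S0I: "S0 \<subseteq> I" unfolding S0_def supp_def by auto
  have fS0: "finite S0" using S0I fI finite_subset by auto
  have step3: "card W \<le> q ^ card S0"
  proof -
    have "inj_on (\<lambda>h. restrict h S0) W"
    proof (rule inj_onI, rule ccontr)
      fix h1 h2 assume h: "h1 \<in> W" "h2 \<in> W" "restrict h1 S0 = restrict h2 S0" "h1 \<noteq> h2"
      have ex: "\<exists>x\<in>I. h1 x \<noteq> h2 x"
      proof (rule ccontr)
        assume "\<not> ?thesis"
        then have "h1 = h2" using h(1,2) unfolding W_def by (intro PiE_ext) auto
        then show False using h(4) by simp
      qed
      then obtain x where x: "x \<in> I" "h1 x \<noteq> h2 x" by auto
      have xS: "x \<notin> S0" using fun_cong[OF h(3), of x] x by auto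
      define h' where "h' = restrict (\<lambda>z. 1 * h0 z + 1 * restrict (\<lambda>z. 1 * h1 z + (-1) * h2 z) I z) I"
      have h'W: "h' \<in> W" unfolding h'_def by (intro Wlin h0(1) h(1,2))
      have "insert x S0 \<subseteq> supp h'"
      proof
        fix z assume z: "z \<in> insert x S0"
        show "z \<in> supp h'"
        proof (cases "z = x")
          case True
          have "h0 x = 0" using xS x(1) unfolding S0_def supp_def by auto
          then show ?thesis using True x unfolding h'_def supp_def by auto
        next
          case False
          then have zS: "z \<in> S0" using z by auto
          then have "h1 z = h2 z" using fun_cong[OF h(3), of z] by auto
          then show ?thesis using zS S0I unfolding h'_def supp_def S0_def by auto
        qed
      qed
      moreover have "finite (supp h')" unfolding supp_def using fI by auto
      ultimately have "card (insert x S0) \<le> card (supp h')" by (meson card_mono)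
      then have "card S0 + 1 \<le> card (supp h')" using xS fS0 by simp
      then show False using maxP[OF h'W] unfolding S0_def by simp
    qed
    moreover have "(\<lambda>h. restrict h S0) ` W \<subseteq> (FS S0 :: ('i \<Rightarrow> 'a) set)" by auto
    moreover have "finite ((FS S0 :: ('i \<Rightarrow> 'a) set))" using fS0 by (simp add: finite_PiE)
    ultimately have "card W \<le> card ((FS S0 :: ('i \<Rightarrow> 'a) set))" by (rule card_inj_on_le)
    also have "\<dots> = q ^ card S0" using fS0 by (simp add: card_PiE q_def)
    finally show ?thesis .
  qed
  define G1 where "G1 s y = (\<Sum>z\<in>I. g1 s y z * h0 z)" for s y
  define G2 where "G2 s x = (\<Sum>z\<in>I. g2 s x z * h0 z)" for s x
  have key: "(if x = y then h0 x else 0) = (\<Sum>s\<in>R1. f1 s x * G1 s y) + (\<Sum>s\<in>R2. G2 s x * f2 s y)"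
    if xy: "x \<in> I" "y \<in> I" for x y
  proof -
    have "(if x = y then h0 x else 0) = (\<Sum>z\<in>I. (if x = y \<and> y = z then 1 else 0) * h0 z)"
      using sum_delta_mult[OF fI xy(2), of "x = y" h0] by auto
    also have "\<dots> = (\<Sum>z\<in>I. ((\<Sum>s\<in>R1. f1 s x * g1 s y z) + (\<Sum>s\<in>R2. f2 s y * g2 s x z) + (\<Sum>s\<in>R3. f3 s z * g3 s x y)) * h0 z)"
      using dec xy by (intro sum.cong) auto
    also have "\<dots> = (\<Sum>s\<in>R1. f1 s x * G1 s y) + (\<Sum>s\<in>R2. G2 s x * f2 s y) + (\<Sum>s\<in>R3. (\<Sum>z\<in>I. h0 z * f3 s z) * g3 s x y)"
      unfolding G1_def G2_def
      by (simp add: algebra_simps sum.distrib sum_distrib_left sum_distrib_right sum.swap[of _ I])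
    also have "(\<Sum>s\<in>R3. (\<Sum>z\<in>I. h0 z * f3 s z) * g3 s x y) = 0"
      using h0(1) unfolding W_def by simp
    finally show ?thesis by simp
  qed
  define \<Psi> where "\<Psi> p = restrict (\<lambda>x. (\<Sum>s\<in>R1. f1 s x * fst p s) + (\<Sum>s\<in>R2. G2 s x * snd p s)) I" for p
  define chm where "chm v = restrict (\<lambda>x. if x \<in> S0 then v x else 0) I" for v :: "'i \<Rightarrow> 'a"
  have step4: "card S0 \<le> card R1 + card R2"
  proof -
    have "inj_on chm ((FS S0 :: ('i \<Rightarrow> 'a) set))"
    proof (rule inj_onI)
      fix v1 v2 assume v: "v1 \<in> (FS S0 :: ('i \<Rightarrow> 'a) set)" "v2 \<in> (FS S0 :: ('i \<Rightarrow> 'a) set)" "chm v1 = chm v2"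
      have "v1 x = v2 x" if "x \<in> S0" for x using fun_cong[OF v(3), of x] that S0I unfolding chm_def by auto
      then show "v1 = v2" using v(1,2) by (intro PiE_ext) auto
    qed
    moreover have "chm ` (FS S0 :: ('i \<Rightarrow> 'a) set) \<subseteq> \<Psi> ` ((FS R1 :: ('s1 \<Rightarrow> 'a) set) \<times> (FS R2 :: ('s2 \<Rightarrow> 'a) set))"
    proof
      fix u assume "u \<in> chm ` (FS S0 :: ('i \<Rightarrow> 'a) set)"
      then obtain v where v: "u = chm v" by auto
      define w where "w x = (if x \<in> S0 then v x / h0 x else 0)" for x
      define lam where "lam = restrict (\<lambda>s. \<Sum>y\<in>I. G1 s y * w y) R1"
      define mu where "mu = restrict (\<lambda>s. \<Sum>y\<in>I. f2 s y * w y) R2"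
      have "chm v = \<Psi> (lam, mu)"
      proof
        fix x
        show "chm v x = \<Psi> (lam, mu) x"
        proof (cases "x \<in> I")
          case False then show ?thesis unfolding chm_def \<Psi>_def by simp
        next
          case True
          have "(if x \<in> S0 then v x else 0) = h0 x * w x"
            unfolding w_def S0_def supp_def using True by auto
          also have "\<dots> = (\<Sum>y\<in>I. (if x = y then h0 x else 0) * w y)"
          proof -
            have "(\<Sum>y\<in>I. (if x = y then h0 x else 0) * w y) = (\<Sum>y\<in>I. if y = x then h0 x * w y else 0)"
              by (intro sum.cong) auto
            then show ?thesis using True fI by simp
          qed
          also have "\<dots> = (\<Sum>y\<in>I. ((\<Sum>s\<in>R1. f1 s x * G1 s y) + (\<Sum>s\<in>R2. G2 s x * f2 s y)) * w y)"
            using key True by (intro sum.cong) auto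
          also have "\<dots> = (\<Sum>s\<in>R1. f1 s x * lam s) + (\<Sum>s\<in>R2. G2 s x * mu s)"
            unfolding lam_def mu_def
            by (simp add: algebra_simps sum.distrib sum_distrib_left sum_distrib_right sum.swap[of _ I])
          finally show ?thesis unfolding chm_def \<Psi>_def using True by simp
        qed
      qed
      moreover have "(lam, mu) \<in> (FS R1 :: ('s1 \<Rightarrow> 'a) set) \<times> (FS R2 :: ('s2 \<Rightarrow> 'a) set)" unfolding lam_def mu_def by auto
      ultimately show "u \<in> \<Psi> ` ((FS R1 :: ('s1 \<Rightarrow> 'a) set) \<times> (FS R2 :: ('s2 \<Rightarrow> 'a) set))" using v by auto
    qed
    moreover have "finite ((FS R1 :: ('s1 \<Rightarrow> 'a) set) \<times> (FS R2 :: ('s2 \<Rightarrow> 'a) set))" using f1 f2 by (simp add: finite_PiE)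
    ultimately have "card ((FS S0 :: ('i \<Rightarrow> 'a) set)) \<le> card (\<Psi> ` ((FS R1 :: ('s1 \<Rightarrow> 'a) set) \<times> (FS R2 :: ('s2 \<Rightarrow> 'a) set)))"
      by (meson card_inj_on_le finite_imageI)
    also have "\<dots> \<le> card ((FS R1 :: ('s1 \<Rightarrow> 'a) set) \<times> (FS R2 :: ('s2 \<Rightarrow> 'a) set))"
      using \<open>finite ((FS R1 :: ('s1 \<Rightarrow> 'a) set) \<times> (FS R2 :: ('s2 \<Rightarrow> 'a) set))\<close> by (rule card_image_le)
    also have "\<dots> = q ^ (card R1 + card R2)"
      using f1 f2 by (simp add: card_cartesian_product card_PiE q_def power_add)
    finally have "q ^ card S0 \<le> q ^ (card R1 + card R2)"
      using fS0 by (simp add: card_PiE q_def)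
    then show ?thesis using q2 by (simp add: power_le_imp_le_exp)
  qed
  have "q ^ card I \<le> q ^ (card R1 + card R2 + card R3)"
  proof -
    have "q ^ card I = card ((FS I :: ('i \<Rightarrow> 'a) set))" using fI by (simp add: card_PiE q_def)
    also have "\<dots> \<le> card W * q ^ card R3" by (rule step1)
    also have "\<dots> \<le> q ^ card S0 * q ^ card R3" using step3 by simp
    also have "\<dots> \<le> q ^ (card R1 + card R2) * q ^ card R3"
      using step4 q2 by (intro mult_right_mono power_increasing) auto
    finally show ?thesis by (simp add: power_add)
  qed
  then show ?thesis using q2 by (simp add: power_le_imp_le_exp)
qed

definition mv :: "('n \<Rightarrow> nat) \<Rightarrow> 'a::comm_ring_1 ^ 'n \<Rightarrow> 'a" where
  "mv e U = (\<Prod>t\<in>UNIV. (U $ t) ^ (e t))"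

lemma indicator_prod:
  fixes s :: "'a::{finite,field} ^ 'n"
  shows "(if s = 0 then 1 else 0) = (\<Prod>t\<in>UNIV. 1 - (s $ t) ^ (CARD('a) - 1))"
proof -
  have "(\<Prod>t\<in>UNIV. 1 - (s $ t) ^ (CARD('a) - 1)) = (\<Prod>t\<in>UNIV. if s $ t = 0 then 1 else (0::'a))"
    by (intro prod.cong refl one_minus_pow)
  also have "\<dots> = (if s = 0 then 1 else 0)"
  proof (cases "s = 0")
    case True then show ?thesis by simp
  next
    case False
    then obtain t where "s $ t \<noteq> 0" by (auto simp: vec_eq_iff)
    then have "(\<Prod>t\<in>UNIV. if s $ t = 0 then 1 else (0::'a)) = 0"
      by (subst prod_zero_iff) auto
    then show ?thesis using False by simp
  qed
  finally show ?thesis by simp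
qed

lemma tensor_expand:
  fixes U V W :: "'a::{finite,field} ^ 'n"
  defines "Q \<equiv> CARD('a) - 1"
  shows "(if U + V + W = 0 then 1 else 0) =
    (\<Sum>\<sigma>\<in>PiE UNIV (\<lambda>_. Tm Q). (\<Prod>t\<in>UNIV. Kc Q (\<sigma> t)) * mv (ea \<circ> \<sigma>) U * mv (eb \<circ> \<sigma>) V * mv (ec Q \<circ> \<sigma>) W)"
proof -
  have "(if U + V + W = 0 then 1 else 0) = (\<Prod>t\<in>UNIV. 1 - ((U + V + W) $ t) ^ Q)"
    unfolding Q_def by (rule indicator_prod)
  also have "\<dots> = (\<Prod>t\<in>UNIV. \<Sum>\<tau>\<in>Tm Q. Kc Q \<tau> * (U $ t) ^ ea \<tau> * (V $ t) ^ eb \<tau> * (W $ t) ^ ec Q \<tau>)"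
    by (simp add: expand3)
  also have "\<dots> = (\<Sum>\<sigma>\<in>PiE UNIV (\<lambda>_. Tm Q). \<Prod>t\<in>UNIV. Kc Q (\<sigma> t) * (U $ t) ^ ea (\<sigma> t) * (V $ t) ^ eb (\<sigma> t) * (W $ t) ^ ec Q (\<sigma> t))"
    by (rule prod_sum_PiE) (auto simp: finite_Tm)
  also have "\<dots> = (\<Sum>\<sigma>\<in>PiE UNIV (\<lambda>_. Tm Q). (\<Prod>t\<in>UNIV. Kc Q (\<sigma> t)) * mv (ea \<circ> \<sigma>) U * mv (eb \<circ> \<sigma>) V * mv (ec Q \<circ> \<sigma>) W)"
    unfolding mv_def by (simp add: prod.distrib)
  finally show ?thesis .
qed

lemma tricolor:
  fixes \<alpha> \<beta> \<gamma> :: "'i \<Rightarrow> 'a::{finite,field} ^ 'n"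
  assumes fI: "finite I"
    and sf: "\<And>x y z. x \<in> I \<Longrightarrow> y \<in> I \<Longrightarrow> z \<in> I \<Longrightarrow> (\<alpha> x + \<beta> y + \<gamma> z = 0) = (x = y \<and> y = z)"
  shows "card I \<le> 3 * card {e :: 'n \<Rightarrow> nat. e \<in> PiE UNIV (\<lambda>_. {..<CARD('a)}) \<and> 3 * sum e UNIV \<le> (CARD('a) - 1) * CARD('n)}"
proof -
  define Q where "Q = CARD('a) - 1"
  define N where "N = CARD('n)"
  define Mon where "Mon = {e :: 'n \<Rightarrow> nat. e \<in> PiE UNIV (\<lambda>_. {..<CARD('a)}) \<and> 3 * sum e UNIV \<le> Q * N}"
  define S where "S = PiE (UNIV :: 'n set) (\<lambda>_. Tm Q)"
  define P where "P e = (3 * sum e UNIV \<le> Q * N)" for e :: "'n \<Rightarrow> nat"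
  define KK where "KK \<sigma> = (\<Prod>t\<in>UNIV. Kc Q (\<sigma> t) :: 'a)" for \<sigma> :: "'n \<Rightarrow> (nat \<times> nat) option"
  define A where "A \<sigma> = ea \<circ> \<sigma>" for \<sigma> :: "'n \<Rightarrow> (nat \<times> nat) option"
  define B where "B \<sigma> = eb \<circ> \<sigma>" for \<sigma> :: "'n \<Rightarrow> (nat \<times> nat) option"
  define C where "C \<sigma> = ec Q \<circ> \<sigma>" for \<sigma> :: "'n \<Rightarrow> (nat \<times> nat) option"
  have fS: "finite S" unfolding S_def by (auto intro: finite_PiE simp: finite_Tm)
  have q: "CARD('a) = Q + 1" unfolding Q_def using fin_field_card_ge2[where 'a='a] by simp
  have inMon: "E \<sigma> \<in> PiE UNIV (\<lambda>_. {..<CARD('a)})" if "\<sigma> \<in> S" "E = A \<or> E = B \<or> E = C" for \<sigma> E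
  proof -
    have "ea (\<sigma> t) + eb (\<sigma> t) + ec Q (\<sigma> t) \<le> Q" for t
      using Tm_deg[of "\<sigma> t" Q] that(1) unfolding S_def by auto
    then have "ea (\<sigma> t) \<le> Q" "eb (\<sigma> t) \<le> Q" "ec Q (\<sigma> t) \<le> Q" for t
      by (meson add_leE)+
    then show ?thesis using that(2) unfolding A_def B_def C_def q by (auto simp: less_Suc_eq_le)
  qed
  have degS: "P (C \<sigma>)" if "\<sigma> \<in> S" "\<not> P (A \<sigma>)" "\<not> P (B \<sigma>)" for \<sigma>
  proof -
    have "ea (\<sigma> t) + eb (\<sigma> t) + ec Q (\<sigma> t) \<le> Q" for t
      using Tm_deg[of "\<sigma> t" Q] that(1) unfolding S_def by auto
    then have "(\<Sum>t\<in>UNIV. ea (\<sigma> t) + eb (\<sigma> t) + ec Q (\<sigma> t)) \<le> (\<Sum>t\<in>(UNIV::'n set). Q)"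
      by (intro sum_mono) auto
    then have "sum (A \<sigma>) UNIV + sum (B \<sigma>) UNIV + sum (C \<sigma>) UNIV \<le> Q * N"
      unfolding A_def B_def C_def N_def by (simp add: sum.distrib mult.commute)
    then show ?thesis using that(2,3) unfolding P_def by linarith
  qed
  obtain G1 G2 G3 where G: "\<And>U V W. (\<Sum>\<sigma>\<in>S. KK \<sigma> * mv (A \<sigma>) U * mv (B \<sigma>) V * mv (C \<sigma>) W)
     = (\<Sum>e\<in>A ` {\<sigma>\<in>S. P (A \<sigma>)}. mv e U * G1 e V W)
     + (\<Sum>e\<in>B ` {\<sigma>\<in>S. \<not> P (A \<sigma>) \<and> P (B \<sigma>)}. mv e V * G2 e U W)
     + (\<Sum>e\<in>C ` {\<sigma>\<in>S. \<not> P (A \<sigma>) \<and> \<not> P (B \<sigma>)}. mv e W * G3 e U V)"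
    using slice_split[OF fS, of KK mv A B C P] by blast
  define R1 where "R1 = A ` {\<sigma>\<in>S. P (A \<sigma>)}"
  define R2 where "R2 = B ` {\<sigma>\<in>S. \<not> P (A \<sigma>) \<and> P (B \<sigma>)}"
  define R3 where "R3 = C ` {\<sigma>\<in>S. \<not> P (A \<sigma>) \<and> \<not> P (B \<sigma>)}"
  have finMon: "finite Mon"
  proof -
    have "Mon \<subseteq> PiE UNIV (\<lambda>_. {..<CARD('a)})" unfolding Mon_def by auto
    moreover have "finite (PiE (UNIV::'n set) (\<lambda>_. {..<CARD('a)}))" by (intro finite_PiE) auto
    ultimately show ?thesis by (rule finite_subset)
  qed
  have R1M: "R1 \<subseteq> Mon" unfolding R1_def Mon_def using inMon unfolding P_def by auto
  have R2M: "R2 \<subseteq> Mon" unfolding R2_def Mon_def using inMon unfolding P_def by auto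
  have R3M: "R3 \<subseteq> Mon" unfolding R3_def Mon_def using inMon degS unfolding P_def by auto
  have "card I \<le> card R1 + card R2 + card R3"
  proof (rule slice_rank_diag[where ?f1.0 = "\<lambda>s x. mv s (\<alpha> x)" and ?g1.0 = "\<lambda>s y z. G1 s (\<beta> y) (\<gamma> z)"
        and ?f2.0 = "\<lambda>s y. mv s (\<beta> y)" and ?g2.0 = "\<lambda>s x z. G2 s (\<alpha> x) (\<gamma> z)"
        and ?f3.0 = "\<lambda>s z. mv s (\<gamma> z)" and ?g3.0 = "\<lambda>s x y. G3 s (\<alpha> x) (\<beta> y)"])
    show "finite I" by (rule fI)
    show "finite R1" using R1M finMon by (rule finite_subset)
    show "finite R2" using R2M finMon by (rule finite_subset)
    show "finite R3" using R3M finMon by (rule finite_subset)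
    fix x y z assume xyz: "x \<in> I" "y \<in> I" "z \<in> I"
    have "(if x = y \<and> y = z then 1 else (0::'a)) = (if \<alpha> x + \<beta> y + \<gamma> z = 0 then 1 else 0)"
      using sf[OF xyz] by simp
    also have "\<dots> = (\<Sum>\<sigma>\<in>S. KK \<sigma> * mv (A \<sigma>) (\<alpha> x) * mv (B \<sigma>) (\<beta> y) * mv (C \<sigma>) (\<gamma> z))"
      unfolding S_def KK_def A_def B_def C_def Q_def by (rule tensor_expand)
    also have "\<dots> = (\<Sum>s\<in>R1. mv s (\<alpha> x) * G1 s (\<beta> y) (\<gamma> z)) + (\<Sum>s\<in>R2. mv s (\<beta> y) * G2 s (\<alpha> x) (\<gamma> z))
        + (\<Sum>s\<in>R3. mv s (\<gamma> z) * G3 s (\<alpha> x) (\<beta> y))"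
      unfolding R1_def R2_def R3_def by (rule G)
    finally show "(if x = y \<and> y = z then 1 else 0) = (\<Sum>s\<in>R1. mv s (\<alpha> x) * G1 s (\<beta> y) (\<gamma> z)) + (\<Sum>s\<in>R2. mv s (\<beta> y) * G2 s (\<alpha> x) (\<gamma> z))
        + (\<Sum>s\<in>R3. mv s (\<gamma> z) * G3 s (\<alpha> x) (\<beta> y))" .
  qed
  also have "\<dots> \<le> card Mon + card Mon + card Mon"
    using card_mono[OF finMon R1M] card_mono[OF finMon R2M] card_mono[OF finMon R3M] by linarith
  finally show ?thesis unfolding Mon_def Q_def N_def by simp
qed

lemma mon_bound_x:
  fixes q :: nat and x :: real
  assumes x: "0 < x" "x < 1" and q1: "q \<ge> 1"
  shows "real (card {e :: 'n::finite \<Rightarrow> nat. e \<in> PiE UNIV (\<lambda>_. {..<q}) \<and> 3 * sum e UNIV \<le> (q - 1) * CARD('n)})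
    \<le> ((\<Sum>i<q. x ^ i) / x powr ((real q - 1) / 3)) ^ CARD('n)"
proof -
  define N where "N = CARD('n)"
  define P where "P = PiE (UNIV :: 'n set) (\<lambda>_. {..<q})"
  define Mon where "Mon = {e \<in> P. 3 * sum e UNIV \<le> (q - 1) * N}"
  define d where "d = real ((q - 1) * N) / 3"
  have fP: "finite P" unfolding P_def by (intro finite_PiE) auto
  have fM: "finite Mon" using fP unfolding Mon_def by auto
  have "(\<Sum>e\<in>P. x ^ sum e UNIV) = (\<Sum>e\<in>P. \<Prod>t\<in>UNIV. x ^ e t)"
    by (simp add: power_sum)
  also have "\<dots> = (\<Prod>t\<in>(UNIV::'n set). \<Sum>i<q. x ^ i)"
    unfolding P_def by (rule prod_sum_PiE[symmetric]) auto
  also have "\<dots> = (\<Sum>i<q. x ^ i) ^ N" by (simp add: N_def)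
  finally have tot: "(\<Sum>e\<in>P. x ^ sum e UNIV) = (\<Sum>i<q. x ^ i) ^ N" .
  have low: "x powr d \<le> x ^ sum e UNIV" if "e \<in> Mon" for e
  proof -
    have "3 * sum e UNIV \<le> (q - 1) * N" using that unfolding Mon_def by auto
    then have "real (3 * sum e UNIV) \<le> real ((q - 1) * N)" by (rule of_nat_mono)
    then have "real (sum e UNIV) \<le> d" unfolding d_def by (simp only: of_nat_mult)
    then have "x powr d \<le> x powr real (sum e UNIV)" using x by (intro powr_mono') auto
    also have "\<dots> = x ^ sum e UNIV" using x(1) by (rule powr_realpow)
    finally show ?thesis .
  qed
  have "real (card Mon) * x powr d = (\<Sum>e\<in>Mon. x powr d)" by simp
  also have "\<dots> \<le> (\<Sum>e\<in>Mon. x ^ sum e UNIV)" using low by (intro sum_mono) auto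
  also have "\<dots> \<le> (\<Sum>e\<in>P. x ^ sum e UNIV)"
    using fP x by (intro sum_mono2) (auto simp: Mon_def)
  finally have "real (card Mon) * x powr d \<le> (\<Sum>i<q. x ^ i) ^ N" using tot by simp
  moreover have "x powr d = (x powr ((real q - 1) / 3)) ^ N"
  proof -
    have dd: "d = real N * ((real q - 1) / 3)"
      unfolding d_def using q1 by (simp add: of_nat_diff algebra_simps)
    show ?thesis using x by (simp only: dd powr_power)
  qed
  ultimately have "real (card Mon) \<le> (\<Sum>i<q. x ^ i) ^ N / (x powr ((real q - 1) / 3)) ^ N"
    using x by (simp add: pos_le_divide_eq)
  then show ?thesis unfolding Mon_def P_def N_def by (simp add: power_divide)
qed

lemma mon_bound_Gamma:
  fixes q :: nat
  assumes q1: "q \<ge> 1"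
  shows "real (card {e :: 'n::finite \<Rightarrow> nat. e \<in> PiE UNIV (\<lambda>_. {..<q}) \<and> 3 * sum e UNIV \<le> (q - 1) * CARD('n)})
    \<le> Gamma_q q ^ CARD('n)"
proof -
  define M where "M = real (card {e :: 'n::finite \<Rightarrow> nat. e \<in> PiE UNIV (\<lambda>_. {..<q}) \<and> 3 * sum e UNIV \<le> (q - 1) * CARD('n)})"
  define N where "N = CARD('n)"
  define f where "f x = (\<Sum>i<q. x ^ i) / x powr ((real q - 1) / 3)" for x :: real
  have G: "Gamma_q q = (INF x\<in>{0<..<1::real}. f x)"
    unfolding Gamma_q_def J_fun_def f_def using q1 by simp
  have N0: "N > 0" unfolding N_def by simp
  have M0: "M \<ge> 0" unfolding M_def by simp
  define r where "r = root N M"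
  have rN: "r ^ N = M" unfolding r_def using N0 M0 by simp
  have r0: "r \<ge> 0" unfolding r_def using M0 by (rule real_root_ge_zero)
  have rle: "r \<le> f x" if x: "x \<in> {0<..<1}" for x
  proof -
    have fpos: "f x \<ge> 0" unfolding f_def using x by (auto intro!: divide_nonneg_nonneg sum_nonneg)
    have "r ^ Suc (N - 1) \<le> f x ^ Suc (N - 1)"
      using rN mon_bound_x[of x q] x q1 N0 unfolding M_def N_def f_def by simp
    then show ?thesis using fpos by (rule power_le_imp_le_base)
  qed
  have "r \<le> (INF x\<in>{0<..<1::real}. f x)"
    by (rule cINF_greatest) (use rle in auto)
  then have "r ^ N \<le> (INF x\<in>{0<..<1::real}. f x) ^ N" using r0 by (intro power_mono) auto
  then show ?thesis using rN G unfolding M_def N_def by simp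
qed

lemma card_filter_as_sum:
  assumes "finite V"
  shows "card {w\<in>V. P w} = (\<Sum>w\<in>V. if P w then 1 else 0)"
proof -
  have "(\<Sum>w\<in>V. if P w then 1 else (0::nat)) = (\<Sum>w\<in>{w\<in>V. P w}. 1)"
    using assms by (simp add: sum.inter_filter[symmetric])
  then show ?thesis by simp
qed

lemma low_degree_vertex:
  fixes V :: "'a set" and Nb :: "'a \<Rightarrow> 'a set"
  assumes fV: "finite V" and ne: "V \<noteq> {}"
    and Nb: "\<And>v. finite (Nb v) \<and> card (Nb v) \<le> D"
  shows "\<exists>v\<in>V. card {w\<in>V. w \<noteq> v \<and> (w \<in> Nb v \<or> v \<in> Nb w)} \<le> 2 * D"
proof (rule ccontr)
  assume "\<not> ?thesis"
  then have big: "\<And>v. v \<in> V \<Longrightarrow> 2 * D + 1 \<le> card {w\<in>V. w \<noteq> v \<and> (w \<in> Nb v \<or> v \<in> Nb w)}" by force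
  have deg: "card {w\<in>V. w \<noteq> v \<and> (w \<in> Nb v \<or> v \<in> Nb w)} \<le> card (Nb v) + card {w\<in>V. v \<in> Nb w}" if "v \<in> V" for v
  proof -
    have "{w\<in>V. w \<noteq> v \<and> (w \<in> Nb v \<or> v \<in> Nb w)} \<subseteq> Nb v \<union> {w\<in>V. v \<in> Nb w}" by auto
    then have "card {w\<in>V. w \<noteq> v \<and> (w \<in> Nb v \<or> v \<in> Nb w)} \<le> card (Nb v \<union> {w\<in>V. v \<in> Nb w})"
      using Nb fV by (intro card_mono) auto
    also have "\<dots> \<le> card (Nb v) + card {w\<in>V. v \<in> Nb w}" by (rule card_Un_le)
    finally show ?thesis .
  qed
  have "(\<Sum>v\<in>V. card {w\<in>V. v \<in> Nb w}) = (\<Sum>v\<in>V. \<Sum>w\<in>V. if v \<in> Nb w then 1 else 0)"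
    using fV by (simp add: card_filter_as_sum)
  also have "\<dots> = (\<Sum>w\<in>V. \<Sum>v\<in>V. if v \<in> Nb w then 1 else 0)" by (rule sum.swap)
  also have "\<dots> = (\<Sum>w\<in>V. card {v\<in>V. v \<in> Nb w})" using fV by (simp add: card_filter_as_sum)
  also have "\<dots> \<le> (\<Sum>w\<in>V. D)"
  proof (intro sum_mono)
    fix w assume "w \<in> V"
    have "card {v\<in>V. v \<in> Nb w} \<le> card (Nb w)" using Nb by (intro card_mono) auto
    then show "card {v\<in>V. v \<in> Nb w} \<le> D" using Nb[of w] by linarith
  qed
  finally have s2: "(\<Sum>v\<in>V. card {w\<in>V. v \<in> Nb w}) \<le> card V * D" by simp
  have a1: "(\<Sum>v\<in>V. 2 * D + 1) \<le> (\<Sum>v\<in>V. card {w\<in>V. w \<noteq> v \<and> (w \<in> Nb v \<or> v \<in> Nb w)})"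
    using big by (intro sum_mono) auto
  have a2: "\<dots> \<le> (\<Sum>v\<in>V. card (Nb v) + card {w\<in>V. v \<in> Nb w})"
    using deg by (intro sum_mono) auto
  have a3: "\<dots> = (\<Sum>v\<in>V. card (Nb v)) + (\<Sum>v\<in>V. card {w\<in>V. v \<in> Nb w})" by (rule sum.distrib)
  have a4: "(\<Sum>v\<in>V. card (Nb v)) \<le> (\<Sum>v\<in>V. D)" using Nb by (intro sum_mono) auto
  have "card V * (2 * D + 1) \<le> card V * D + card V * D" using a1 a2 a3 a4 s2 by simp
  moreover have "card V > 0" using fV ne by (simp add: card_gt_0_iff)
  ultimately show False by (simp add: algebra_simps)
qed

lemma indep_set:
  fixes V :: "'a set" and Nb :: "'a \<Rightarrow> 'a set"
  assumes fV: "finite V"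
    and Nb: "\<And>v. finite (Nb v) \<and> card (Nb v) \<le> D"
  shows "\<exists>I\<subseteq>V. (\<forall>x\<in>I. \<forall>y\<in>I. y \<in> Nb x \<longrightarrow> y = x) \<and> card V \<le> (2 * D + 1) * card I"
  using fV
proof (induction V rule: finite_psubset_induct)
  case (psubset V)
  show ?case
  proof (cases "V = {}")
    case True then show ?thesis by auto
  next
    case False
    have "\<exists>v\<in>V. card {w\<in>V. w \<noteq> v \<and> (w \<in> Nb v \<or> v \<in> Nb w)} \<le> 2 * D"
      by (rule low_degree_vertex[OF psubset.hyps False Nb])
    then obtain v where v: "v \<in> V" and dv: "card {w\<in>V. w \<noteq> v \<and> (w \<in> Nb v \<or> v \<in> Nb w)} \<le> 2 * D"
      by blast
    define C where "C = insert v {w\<in>V. w \<noteq> v \<and> (w \<in> Nb v \<or> v \<in> Nb w)}"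
    have cC: "card C \<le> 2 * D + 1"
    proof -
      have "card C \<le> Suc (card {w\<in>V. w \<noteq> v \<and> (w \<in> Nb v \<or> v \<in> Nb w)})"
        unfolding C_def using psubset.hyps by (simp add: card_insert_if)
      then show ?thesis using dv by simp
    qed
    have "V - C \<subset> V" using v unfolding C_def by auto
    from psubset.IH[OF this] obtain I' where I': "I' \<subseteq> V - C"
      "\<forall>x\<in>I'. \<forall>y\<in>I'. y \<in> Nb x \<longrightarrow> y = x" "card (V - C) \<le> (2 * D + 1) * card I'" by blast
    have vI: "v \<notin> I'" using I'(1) unfolding C_def by auto
    have fI: "finite I'" using I'(1) psubset.hyps finite_subset by blast
    show ?thesis
    proof (intro exI conjI)
      show "insert v I' \<subseteq> V" using I'(1) v by auto
      show "\<forall>x\<in>insert v I'. \<forall>y\<in>insert v I'. y \<in> Nb x \<longrightarrow> y = x"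
      proof (intro ballI impI)
        fix x y assume xy: "x \<in> insert v I'" "y \<in> insert v I'" "y \<in> Nb x"
        show "y = x"
        proof (cases "x = v")
          case True
          then show ?thesis using xy I'(1) unfolding C_def by auto
        next
          case False
          then have x: "x \<in> I'" using xy by auto
          show ?thesis
          proof (cases "y = v")
            case True then show ?thesis using xy x I'(1) unfolding C_def by auto
          next
            case False then show ?thesis using xy x I'(2) by auto
          qed
        qed
      qed
      have "card V \<le> card ((V - C) \<union> C)"
        using psubset.hyps unfolding C_def by (intro card_mono) auto
      also have "\<dots> \<le> card (V - C) + card C" by (rule card_Un_le)
      also have "\<dots> \<le> (2 * D + 1) * card I' + (2 * D + 1)" using I'(3) cC by linarith
      also have "\<dots> = (2 * D + 1) * card (insert v I')" using vI fI by simp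
      finally show "card V \<le> (2 * D + 1) * card (insert v I')" .
    qed
  qed
qed

lemma vec_eqI': "(\<And>i. x $ i = y $ i) \<Longrightarrow> x = y" by (simp add: vec_eq_iff)

theorem lemma6p4:
  fixes A :: "nat \<Rightarrow> nat \<Rightarrow> 'a::{finite,field}"
    and m k L j1 j2 :: nat
    and x :: "nat \<Rightarrow> nat \<Rightarrow> 'a ^ 'n"
  assumes RC: "type_RC A m k"
    and nondeg: "non_degenerate A m k"
    and irred: "irreducible_sys A m k"
    and j1: "j1 < k" and j2: "j2 < k" and j12: "j1 \<noteq> j2"
    and same_class: "col_equiv A m j1 j2"
    and sols: "\<forall>i<L. is_solution A m k (x i)"
    and disj: "\<forall>i<L. \<forall>i'<L. i \<noteq> i' \<longrightarrow> disjoint_sols k (x i) (x i')"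
    and large: "real L \<ge> 4 * real CARD('a) ^ k * Gamma_q CARD('a) ^ CARD('n)"
  shows "\<exists>i<L. \<exists>y :: nat \<Rightarrow> 'a ^ 'n.
           is_solution A m k y \<and>
           (\<forall>j<k. j \<noteq> j1 \<and> j \<noteq> j2 \<longrightarrow> y j = x i j) \<and>
           (\<forall>j\<in>{j1, j2}. \<exists>i'<L. y j = x i' j) \<and>
           Ann_bal k y \<subseteq> Ann_bal k (x i) \<and>
           (\<forall>b\<in>Ann_bal k y. \<not> breaks A m j1 j2 b)"
proof (rule ccontr)
  assume NG: "\<not> ?thesis"
  define q where "q = CARD('a)"
  define N where "N = CARD('n)"
  have q2: "q \<ge> 2" unfolding q_def by (rule fin_field_card_ge2)
  have k2: "k \<ge> 2" using j1 j2 j12 by linarith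
  obtain c where c0: "c \<noteq> 0" and c: "\<forall>i<m. A i j1 = c * A i j2"
    using same_class unfolding col_equiv_def by blast
  define a where "a i = x i j1" for i
  define b where "b i = x i j2" for i
  have ainj: "i = i'" if "i < L" "i' < L" "a i = a i'" for i i'
  proof (rule ccontr)
    assume "i \<noteq> i'"
    then have "x i ` {..<k} \<inter> x i' ` {..<k} = {}" using disj that unfolding disjoint_sols_def by auto
    moreover have "a i \<in> x i ` {..<k}" using j1 unfolding a_def by auto
    moreover have "a i \<in> x i' ` {..<k}" using j1 that(3) unfolding a_def by (metis imageI lessThan_iff)
    ultimately show False by blast
  qed
  have binj: "i = i'" if "i < L" "i' < L" "b i = b i'" for i i'
  proof (rule ccontr)
    assume "i \<noteq> i'"
    then have "x i ` {..<k} \<inter> x i' ` {..<k} = {}" using disj that unfolding disjoint_sols_def by auto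
    moreover have "b i \<in> x i ` {..<k}" using j2 unfolding b_def by auto
    moreover have "b i \<in> x i' ` {..<k}" using j2 that(3) unfolding b_def by (metis imageI lessThan_iff)
    ultimately show False by blast
  qed
  define bb where "bb \<beta> j = (if j = j1 then 1 + c * \<beta> j2 else \<beta> j)" for \<beta> :: "nat \<Rightarrow> 'a" and j
  define g where "g i \<beta> = - (\<Sum>j<k. bb \<beta> j *s x i j)" for i \<beta>
  define Bad where "Bad i = g i ` PiE ({..<k} - {j1}) (\<lambda>_. UNIV)" for i
  have finBad: "finite (Bad i)" for i unfolding Bad_def by (intro finite_imageI finite_PiE) auto
  have cardBad: "card (Bad i) \<le> q ^ (k - 1)" for i
  proof -
    have "card (Bad i) \<le> card (PiE ({..<k} - {j1}) (\<lambda>_. UNIV :: 'a set))"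
      unfolding Bad_def by (intro card_image_le finite_PiE) auto
    also have "\<dots> = q ^ (k - 1)" using j1 by (simp add: card_PiE q_def)
    finally show ?thesis .
  qed
  have good: "a i1 - a i \<in> Bad i"
    if i: "i < L" "i1 < L" "i2 < L" and eq: "c *s a i1 + b i2 = c *s a i + b i" for i i1 i2
  proof (rule ccontr)
    assume nb: "a i1 - a i \<notin> Bad i"
    define u where "u = a i1 - a i"
    have bu: "b i2 - b i = - (c *s u)"
      using eq unfolding u_def by (simp add: vec_eq_iff algebra_simps)
    define y where "y = (x i)(j1 := a i1, j2 := b i2)"
    have yj: "y j $ t = x i j $ t + (if j = j1 then u $ t else 0) + (if j = j2 then - (c * u $ t) else 0)" for j t
    proof -
      have bu': "b i2 $ t = b i $ t - c * u $ t" using bu by (simp add: vec_eq_iff algebra_simps)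
      show ?thesis using j12 bu' unfolding y_def u_def a_def b_def by auto
    qed
    have ysum: "(\<Sum>j<k. w j *s y j) = (\<Sum>j<k. w j *s x i j) + (w j1 - c * w j2) *s u" for w
    proof (rule vec_eqI')
      fix t
      have "(\<Sum>j<k. w j *s y j) $ t = (\<Sum>j<k. w j * (x i j $ t + (if j = j1 then u $ t else 0) + (if j = j2 then - (c * u $ t) else 0)))"
        by (simp add: yj)
      also have "\<dots> = (\<Sum>j<k. w j * x i j $ t) + (\<Sum>j<k. if j = j1 then w j1 * u $ t else 0) + (\<Sum>j<k. if j = j2 then - (w j2 * c * u $ t) else 0)"
        by (simp add: sum.distrib distrib_left if_distrib[of "(*) (w _)"] cong: if_cong)
      also have "\<dots> = (\<Sum>j<k. w j * x i j $ t) + w j1 * u $ t - w j2 * c * u $ t"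
        using j1 j2 by (simp add: sum.delta)
      also have "\<dots> = ((\<Sum>j<k. w j *s x i j) + (w j1 - c * w j2) *s u) $ t"
        by (simp add: algebra_simps)
      finally show "(\<Sum>j<k. w j *s y j) $ t = ((\<Sum>j<k. w j *s x i j) + (w j1 - c * w j2) *s u) $ t" .
    qed
    have ysol: "is_solution A m k y"
      unfolding is_solution_def
    proof (intro allI impI)
      fix r assume r: "r < m"
      have "(\<Sum>j<k. A r j *s y j) = (\<Sum>j<k. A r j *s x i j) + (A r j1 - c * A r j2) *s u" by (rule ysum)
      also have "\<dots> = 0" using sols i r c unfolding is_solution_def by simp
      finally show "(\<Sum>j<k. A r j *s y j) = 0" .
    qed
    have ann: "w j1 = c * w j2 \<and> w \<in> Ann_bal k (x i)" if w: "w \<in> Ann_bal k y" for w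
    proof -
      have w0: "\<forall>j. k \<le> j \<longrightarrow> w j = 0" and wy: "(\<Sum>j<k. w j *s y j) = 0" and wb: "(\<Sum>j<k. w j) = 0"
        using w unfolding Ann_bal_def by auto
      have wc: "w j1 = c * w j2"
      proof (rule ccontr)
        assume ne: "w j1 \<noteq> c * w j2"
        define ph where "ph = w j1 - c * w j2"
        have ph: "ph \<noteq> 0" using ne unfolding ph_def by simp
        have E: "(\<Sum>j<k. w j *s x i j) + ph *s u = 0" using wy ysum[of w] unfolding ph_def by simp
        define \<beta> where "\<beta> = restrict (\<lambda>j. w j / ph) ({..<k} - {j1})"
        have \<beta>P: "\<beta> \<in> PiE ({..<k} - {j1}) (\<lambda>_. UNIV)" unfolding \<beta>_def by auto
        have bbj: "bb \<beta> j = w j / ph" if "j < k" for j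
        proof (cases "j = j1")
          case True
          have "1 + c * (w j2 / ph) = w j1 / ph" using ph unfolding ph_def by (simp add: field_simps)
          then show ?thesis using True j2 j12 unfolding bb_def \<beta>_def by simp
        next
          case False then show ?thesis using that unfolding bb_def \<beta>_def by simp
        qed
        have "g i \<beta> = u"
        proof (rule vec_eqI')
          fix t
          have "g i \<beta> $ t = - (\<Sum>j<k. w j / ph * x i j $ t)" unfolding g_def using bbj by simp
          also have "\<dots> = - (\<Sum>j<k. w j * x i j $ t) / ph" by (simp add: sum_divide_distrib[symmetric])
          also have "\<dots> = u $ t"
          proof -
            have "(\<Sum>j<k. w j * x i j $ t) + ph * u $ t = 0" using arg_cong[OF E, of "\<lambda>v. v $ t"] by simp
            then show ?thesis using ph by (simp add: field_simps) (metis add.commute add_eq_0_iff)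
          qed
          finally show "g i \<beta> $ t = u $ t" .
        qed
        then have "u \<in> Bad i" using \<beta>P unfolding Bad_def by blast
        then show False using nb unfolding u_def by simp
      qed
      then have "(\<Sum>j<k. w j *s x i j) = 0" using wy ysum[of w] by simp
      then show ?thesis using wc w0 wb unfolding Ann_bal_def by simp
    qed
    have "\<exists>i<L. \<exists>y :: nat \<Rightarrow> 'a ^ 'n.
           is_solution A m k y \<and>
           (\<forall>j<k. j \<noteq> j1 \<and> j \<noteq> j2 \<longrightarrow> y j = x i j) \<and>
           (\<forall>j\<in>{j1, j2}. \<exists>i'<L. y j = x i' j) \<and>
           Ann_bal k y \<subseteq> Ann_bal k (x i) \<and>
           (\<forall>b\<in>Ann_bal k y. \<not> breaks A m j1 j2 b)"
    proof (intro exI conjI)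
      show "i < L" by (rule i(1))
      show "is_solution A m k y" by (rule ysol)
      show "\<forall>j<k. j \<noteq> j1 \<and> j \<noteq> j2 \<longrightarrow> y j = x i j" unfolding y_def by auto
      show "\<forall>j\<in>{j1, j2}. \<exists>i'<L. y j = x i' j" unfolding y_def a_def b_def using i j12 by auto
      show "Ann_bal k y \<subseteq> Ann_bal k (x i)" using ann by blast
      show "\<forall>w\<in>Ann_bal k y. \<not> breaks A m j1 j2 w"
      proof
        fix w assume "w \<in> Ann_bal k y"
        then have wc: "w j1 = c * w j2" using ann by blast
        show "\<not> breaks A m j1 j2 w"
          unfolding breaks_def col_equiv_def append_row_def
          using c0 c wc by (simp add: less_Suc_eq) (metis less_Suc_eq)
      qed
    qed
    then show False using NG by blast
  qed
  define D where "D = q ^ (k - 1)"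
  define Nb where "Nb i = {i1. i1 < L \<and> a i1 - a i \<in> Bad i}" for i
  have Nb: "finite (Nb i) \<and> card (Nb i) \<le> D" for i
  proof
    show "finite (Nb i)" unfolding Nb_def by auto
    have "inj_on (\<lambda>i1. a i1 - a i) (Nb i)" using ainj unfolding Nb_def inj_on_def by auto
    moreover have "(\<lambda>i1. a i1 - a i) ` Nb i \<subseteq> Bad i" unfolding Nb_def by auto
    ultimately have "card (Nb i) \<le> card (Bad i)" using finBad by (meson card_inj_on_le)
    then show "card (Nb i) \<le> D" using cardBad[of i] unfolding D_def by linarith
  qed
  obtain I where I: "I \<subseteq> {..<L}" "\<forall>x\<in>I. \<forall>y\<in>I. y \<in> Nb x \<longrightarrow> y = x"
    "card {..<L} \<le> (2 * D + 1) * card I"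
    using indep_set[of "{..<L}" Nb D] Nb by blast
  have fI: "finite I" using I(1) finite_subset by blast
  define Mon where "Mon = {e :: 'n \<Rightarrow> nat. e \<in> PiE UNIV (\<lambda>_. {..<CARD('a)}) \<and> 3 * sum e UNIV \<le> (CARD('a) - 1) * CARD('n)}"
  have cI: "card I \<le> 3 * card Mon"
    unfolding Mon_def
  proof (rule tricolor[OF fI, where \<alpha> = "\<lambda>i. c *s a i" and \<beta> = b and \<gamma> = "\<lambda>i. - (c *s a i + b i)"])
    fix x y z assume xyz: "x \<in> I" "y \<in> I" "z \<in> I"
    show "(c *s a x + b y + - (c *s a z + b z) = 0) = (x = y \<and> y = z)"
    proof
      assume "c *s a x + b y + - (c *s a z + b z) = 0"
      then have eq: "c *s a x + b y = c *s a z + b z" by (simp add: algebra_simps)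
      have "a x - a z \<in> Bad z" using good[of z x y] eq xyz I(1) by auto
      then have "x \<in> Nb z" unfolding Nb_def using xyz I(1) by auto
      then have xz: "x = z" using I(2) xyz by blast
      then have "b y = b z" using eq by simp
      then have "y = z" using binj xyz I(1) by auto
      then show "x = y \<and> y = z" using xz by simp
    qed simp
  qed
  have finMon: "finite Mon"
  proof -
    have "Mon \<subseteq> PiE UNIV (\<lambda>_. {..<CARD('a)})" unfolding Mon_def by auto
    moreover have "finite (PiE (UNIV::'n set) (\<lambda>_. {..<CARD('a)}))" by (intro finite_PiE) auto
    ultimately show ?thesis by (rule finite_subset)
  qed
  have "(\<lambda>_. 0) \<in> Mon" unfolding Mon_def using q2 unfolding q_def by auto
  then have M1: "card Mon \<ge> 1" using finMon by (metis One_nat_def Suc_leI card_gt_0_iff empty_iff)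
  have MG: "real (card Mon) \<le> Gamma_q q ^ N"
    unfolding Mon_def q_def N_def by (rule mon_bound_Gamma) simp
  have D2: "D \<ge> 2"
  proof -
    have "q ^ 1 \<le> q ^ (k - 1)" using q2 k2 by (intro power_increasing) auto
    then show ?thesis using q2 unfolding D_def by simp
  qed
  have qk: "q ^ k = q * D" unfolding D_def using k2 by (metis Suc_diff_1 less_le_trans pos2 power_Suc zero_less_numeral)
  have "real L \<le> real ((2 * D + 1) * (3 * card Mon))"
  proof -
    have "L \<le> (2 * D + 1) * card I" using I(3) by simp
    also have "\<dots> \<le> (2 * D + 1) * (3 * card Mon)" using cI by (rule mult_left_mono) simp
    finally show ?thesis by (simp only: of_nat_le_iff)
  qed
  also have "\<dots> = (2 * real D + 1) * 3 * real (card Mon)" by (simp add: algebra_simps)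
  also have "\<dots> < 4 * real q * real D * real (card Mon)"
  proof -
    have "(2 * real D + 1) * 3 < 4 * real q * real D" using D2 q2
    proof -
      have "4 * real q * real D \<ge> 8 * real D" using q2 D2 by (simp add: mult_right_mono)
      moreover have "real D \<ge> 2" using D2 by simp
      moreover have "(2 * real D + 1) * 3 = 6 * real D + 3" by (simp add: algebra_simps)
      ultimately show ?thesis by linarith
    qed
    then show ?thesis using M1 by (intro mult_strict_right_mono) auto
  qed
  also have "\<dots> \<le> 4 * real q * real D * Gamma_q q ^ N"
    using MG q2 by (intro mult_left_mono) auto
  also have "\<dots> = 4 * real CARD('a) ^ k * Gamma_q CARD('a) ^ CARD('n)"
    unfolding q_def[symmetric] N_def[symmetric] using qk by (metis of_nat_mult of_nat_power mult.assoc)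
  finally show False using large by simp
qed

end
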